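(* Let $\Omega\subset\mathbb{R}^n$ be a domain, $\mathcal{S}$ any basis of shapes in $\Omega$, $1\le p<\infty$, and $f\in\mathrm{BMO}^p_{\mathcal{S}}(\Omega)$. Then $\|f\|_{\mathrm{BMO}^p_{\mathcal{S}}}=0$ if and only if $f$ is almost everywhere equal to some constant on $\Omega$.
   Context: A domain is an open connected set. A shape is an open set $S\subset\mathbb{R}^n$ with $0<|S|<\infty$. A basis of shapes in $\Omega$ is a collection of shapes contained in $\Omega$ covering $\Omega$. For $f\in L^1(S)$, $f_S=\frac1{|S|}\int_Sf$. $\mathrm{BMO}^p_{\mathcal{S}}(\Omega)$ is the space of functions $f$ with $f\in L^1(S)$ for all $S\in\mathcal{S}$ such that there is $K\ge0$ with $\big(\frac1{|S|}\int_S|f-f_S|^p\big)^{1/p}\le K$ for all $S\in\mathcal{S}$; $\|f\|_{\mathrm{BMO}^p_{\mathcal{S}}}$ is the infimum of such $K$. *)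

theory Defs
  imports "HOL-Analysis.Analysis"
begin

definition domain :: "'a::euclidean_space set \<Rightarrow> bool" where
  "domain \<Omega> \<longleftrightarrow> open \<Omega> \<and> connected \<Omega>"

definition shape :: "'a::euclidean_space set \<Rightarrow> bool" where
  "shape S \<longleftrightarrow> open S \<and> 0 < emeasure lebesgue S \<and> emeasure lebesgue S < \<infinity>"

definition basis_of_shapes :: "'a::euclidean_space set set \<Rightarrow> 'a set \<Rightarrow> bool" where
  "basis_of_shapes \<S> \<Omega> \<longleftrightarrow> (\<forall>S\<in>\<S>. shape S \<and> S \<subseteq> \<Omega>) \<and> \<Union>\<S> = \<Omega>"

definition avg :: "'a::euclidean_space set \<Rightarrow> ('a \<Rightarrow> real) \<Rightarrow> real" where
  "avg S f = (1 / measure lebesgue S) * (\<integral>x\<in>S. f x \<partial>lebesgue)"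

definition mean_osc :: "real \<Rightarrow> 'a::euclidean_space set \<Rightarrow> ('a \<Rightarrow> real) \<Rightarrow> real" where
  "mean_osc p S f =
     ((1 / measure lebesgue S) * (\<integral>x\<in>S. \<bar>f x - avg S f\<bar> powr p \<partial>lebesgue)) powr (1 / p)"

text \<open>K is an admissible bound: the integral of |f - f_S|^p over S is finite
  (implicit in the informal bound being a real number) and the oscillation is at most K.\<close>
definition bmo_bound :: "real \<Rightarrow> 'a::euclidean_space set set \<Rightarrow> ('a \<Rightarrow> real) \<Rightarrow> real \<Rightarrow> bool" where
  "bmo_bound p \<S> f K \<longleftrightarrow> 0 \<le> K \<and>
     (\<forall>S\<in>\<S>. set_integrable lebesgue S (\<lambda>x. \<bar>f x - avg S f\<bar> powr p) \<and> mean_osc p S f \<le> K)"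

definition in_BMO :: "real \<Rightarrow> 'a::euclidean_space set set \<Rightarrow> ('a \<Rightarrow> real) \<Rightarrow> bool" where
  "in_BMO p \<S> f \<longleftrightarrow> (\<forall>S\<in>\<S>. set_integrable lebesgue S f) \<and> (\<exists>K. bmo_bound p \<S> f K)"

definition BMO_norm :: "real \<Rightarrow> 'a::euclidean_space set set \<Rightarrow> ('a \<Rightarrow> real) \<Rightarrow> real" where
  "BMO_norm p \<S> f = Inf {K. bmo_bound p \<S> f K}"

end

theory Submission
  imports Defs
begin

lemma shape_measure_pos:
  assumes "shape S" shows "0 < measure lebesgue S"
proof -
  have "0 < emeasure lebesgue S" "emeasure lebesgue S < top"
    using assms unfolding shape_def infinity_ennreal_def by auto
  thus ?thesis unfolding measure_def by (simp only: enn2real_positive_iff)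
qed

lemma mean_osc_zero_AE:
  assumes S: "shape S" and p: "1 \<le> p"
    and int: "set_integrable lebesgue S (\<lambda>x. \<bar>f x - avg S f\<bar> powr p)"
    and z: "mean_osc p S f = 0"
  shows "AE x in lebesgue. x \<in> S \<longrightarrow> f x = avg S f"
proof -
  have m: "0 < measure lebesgue S" using shape_measure_pos[OF S] .
  have "(1 / measure lebesgue S) * (\<integral>x\<in>S. \<bar>f x - avg S f\<bar> powr p \<partial>lebesgue) = 0"
    using z unfolding mean_osc_def by simp
  hence I: "(\<integral>x\<in>S. \<bar>f x - avg S f\<bar> powr p \<partial>lebesgue) = 0" using m by simp
  have "AE x in lebesgue. indicator S x *\<^sub>R (\<bar>f x - avg S f\<bar> powr p) = 0"
    using int I unfolding set_integrable_def set_lebesgue_integral_def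
    by (subst integral_nonneg_eq_0_iff_AE[symmetric]) (auto simp: indicator_def)
  thus ?thesis by (rule eventually_mono) (auto simp: indicator_def)
qed

lemma avg_const_AE:
  assumes S: "shape S" and int: "set_integrable lebesgue S f"
    and ae: "AE x in lebesgue. x \<in> S \<longrightarrow> f x = c"
  shows "avg S f = c"
proof -
  have Ss: "S \<in> sets lebesgue" using S unfolding shape_def by auto
  have fin: "emeasure lebesgue S \<noteq> \<infinity>" using S unfolding shape_def by auto
  have "(\<integral>x\<in>S. f x \<partial>lebesgue) = (\<integral>x\<in>S. c \<partial>lebesgue)"
    unfolding set_lebesgue_integral_def
  proof (rule integral_cong_AE)
    show "(\<lambda>x. indicator S x *\<^sub>R f x) \<in> borel_measurable lebesgue"
      using int unfolding set_integrable_def by auto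
    show "(\<lambda>x. indicator S x *\<^sub>R c) \<in> borel_measurable lebesgue"
      using Ss by auto
    show "AE x in lebesgue. indicator S x *\<^sub>R f x = indicator S x *\<^sub>R c"
      using ae by (rule eventually_mono) (auto simp: indicator_def)
  qed
  also have "\<dots> = measure lebesgue S * c"
    using set_integral_const[OF Ss fin, of c] by (simp only: real_scaleR_def)
  finally show ?thesis using shape_measure_pos[OF S] unfolding avg_def by simp
qed

theorem proposition3p8:
  fixes \<Omega> :: "'a::euclidean_space set" and \<S> :: "'a set set"
    and f :: "'a \<Rightarrow> real" and p :: real
  assumes "domain \<Omega>" and "basis_of_shapes \<S> \<Omega>"
    and "1 \<le> p" and "in_BMO p \<S> f"
  shows "BMO_norm p \<S> f = 0 \<longleftrightarrow> (\<exists>c. AE x in lebesgue. x \<in> \<Omega> \<longrightarrow> f x = c)"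
proof
  have dom: "open \<Omega>" "connected \<Omega>" using assms(1) unfolding domain_def by auto
  have sh: "\<And>S. S \<in> \<S> \<Longrightarrow> shape S \<and> S \<subseteq> \<Omega>" and U: "\<Union>\<S> = \<Omega>"
    using assms(2) unfolding basis_of_shapes_def by auto
  have opS: "\<And>S. S \<in> \<S> \<Longrightarrow> open S" using sh unfolding shape_def by auto
  obtain K0 where K0: "bmo_bound p \<S> f K0" using assms(4) unfolding in_BMO_def by auto
  have fint: "\<And>S. S \<in> \<S> \<Longrightarrow> set_integrable lebesgue S f" using assms(4) unfolding in_BMO_def by auto
  have oint: "\<And>S. S \<in> \<S> \<Longrightarrow> set_integrable lebesgue S (\<lambda>x. \<bar>f x - avg S f\<bar> powr p)"
    using K0 unfolding bmo_bound_def by auto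
  {
    assume N: "BMO_norm p \<S> f = 0"
    have mo0: "mean_osc p S f = 0" if S: "S \<in> \<S>" for S
    proof (rule ccontr)
      assume "mean_osc p S f \<noteq> 0"
      moreover have "mean_osc p S f \<ge> 0" unfolding mean_osc_def by simp
      ultimately have pos: "mean_osc p S f > 0" by simp
      have "mean_osc p S f \<le> Inf {K. bmo_bound p \<S> f K}"
        using K0 S by (intro cInf_greatest) (auto simp: bmo_bound_def)
      thus False using N pos unfolding BMO_norm_def by simp
    qed
    have ae: "AE x in lebesgue. x \<in> S \<longrightarrow> f x = avg S f" if S: "S \<in> \<S>" for S
      using mean_osc_zero_AE[OF _ assms(3) oint[OF S] mo0[OF S]] sh[OF S] by auto
    have same: "avg S f = avg T f" if st: "S \<in> \<S>" "T \<in> \<S>" "S \<inter> T \<noteq> {}" for S T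
    proof (rule ccontr)
      assume ne: "avg S f \<noteq> avg T f"
      have "AE x \<in> S \<inter> T in lebesgue. x \<in> {}"
        using ae[OF st(1)] ae[OF st(2)] by eventually_elim (use ne in auto)
      moreover obtain x where "x \<in> S \<inter> T" using st(3) by auto
      ultimately show False
        using mem_closed_if_AE_lebesgue_open[of "S \<inter> T" "{}" x] opS st by auto
    qed
    show "\<exists>c. AE x in lebesgue. x \<in> \<Omega> \<longrightarrow> f x = c"
    proof (cases "\<S> = {}")
      case True
      then show ?thesis using U by auto
    next
      case False
      then obtain S0 where S0: "S0 \<in> \<S>" by auto
      define c where "c = avg S0 f"
      define A where "A = \<Union>{S\<in>\<S>. avg S f = c}"
      define B where "B = \<Union>{S\<in>\<S>. avg S f \<noteq> c}"
      have "open A" "open B" unfolding A_def B_def using opS by auto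
      moreover have "A \<inter> B \<inter> \<Omega> = {}"
        unfolding A_def B_def using same by blast
      moreover have "\<Omega> \<subseteq> A \<union> B" unfolding A_def B_def using U by blast
      ultimately have "A \<inter> \<Omega> = {} \<or> B \<inter> \<Omega> = {}"
        using connectedD[OF dom(2)] by blast
      moreover have "A \<inter> \<Omega> \<noteq> {}"
      proof -
        have "S0 \<noteq> {}" using sh[OF S0] unfolding shape_def by auto
        moreover have "S0 \<subseteq> A \<inter> \<Omega>" using S0 sh[OF S0] unfolding A_def c_def by auto
        ultimately show ?thesis by auto
      qed
      ultimately have Bz: "B \<inter> \<Omega> = {}" by blast
      have allc: "avg S f = c" if "S \<in> \<S>" for S
      proof (rule ccontr)
        assume "avg S f \<noteq> c"
        hence "S \<subseteq> B \<inter> \<Omega>" using that sh unfolding B_def by blast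
        moreover have "S \<noteq> {}" using sh[OF that] unfolding shape_def by auto
        ultimately show False using Bz by blast
      qed
      obtain F where F: "F \<subseteq> \<S>" "countable F" "\<Union>F = \<Union>\<S>"
        using Lindelof[of \<S>] opS by blast
      have "AE x in lebesgue. \<forall>S\<in>F. x \<in> S \<longrightarrow> f x = c"
        using F ae allc by (subst AE_ball_countable) auto
      hence "AE x in lebesgue. x \<in> \<Omega> \<longrightarrow> f x = c"
        by (rule eventually_mono) (use F U in auto)
      thus ?thesis by blast
    qed
  }
  {
    assume "\<exists>c. AE x in lebesgue. x \<in> \<Omega> \<longrightarrow> f x = c"
    then obtain c where c: "AE x in lebesgue. x \<in> \<Omega> \<longrightarrow> f x = c" by auto
    have avgc: "avg S f = c" if S: "S \<in> \<S>" for S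
    proof (rule avg_const_AE[OF _ fint[OF S]])
      show "shape S" using sh[OF S] by auto
      show "AE x in lebesgue. x \<in> S \<longrightarrow> f x = c"
        using c by (rule eventually_mono) (use sh[OF S] in auto)
    qed
    have mo: "mean_osc p S f = 0" if S: "S \<in> \<S>" for S
    proof -
      have "(\<integral>x\<in>S. \<bar>f x - avg S f\<bar> powr p \<partial>lebesgue) = (\<integral>x\<in>S. 0 \<partial>lebesgue)"
        unfolding set_lebesgue_integral_def
      proof (rule integral_cong_AE)
        show "(\<lambda>x. indicator S x *\<^sub>R (\<bar>f x - avg S f\<bar> powr p)) \<in> borel_measurable lebesgue"
          using oint[OF S] unfolding set_integrable_def by auto
        show "(\<lambda>x. indicator S x *\<^sub>R (0::real)) \<in> borel_measurable lebesgue" by simp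
        show "AE x in lebesgue. indicator S x *\<^sub>R (\<bar>f x - avg S f\<bar> powr p) = indicator S x *\<^sub>R (0::real)"
          using c by (rule eventually_mono) (use sh[OF S] avgc[OF S] in \<open>auto simp: indicator_def\<close>)
      qed
      thus ?thesis unfolding mean_osc_def by simp
    qed
    have b0: "bmo_bound p \<S> f 0" unfolding bmo_bound_def using oint mo by auto
    show "BMO_norm p \<S> f = 0" unfolding BMO_norm_def
      by (rule cInf_eq_minimum) (use b0 in \<open>auto simp: bmo_bound_def\<close>)
  }
qed

end
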